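(* Let $G$ be a fully connected (complete) graph on $n$ vertices $\{1,\dots,n\}$, and let $t\mapsto\rho_t=(\rho_1(t),\dots,\rho_n(t))$ be a differentiable, $T$-periodic curve in $\mathcal P_o(G)=\{\rho\in\mathbb R^n:\sum_i\rho_i=1,\ \rho_i>0\ \forall i\}$. Then there exists a family of transition rate matrices $Q(t)$ (i.e. $n\times n$ matrices with nonnegative off-diagonal entries and each row summing to zero) such that $\rho_t$ solves the master equation $\dot\rho_t=\rho_tQ(t)$ (row vector times matrix) for all $t$. *)

theory Defs
  imports "HOL-Analysis.Analysis"
begin

definition prob_interior :: "(real ^ 'n) set" where
  "prob_interior = {\<rho>. (\<Sum>i\<in>UNIV. \<rho> $ i) = 1 \<and> (\<forall>i. \<rho> $ i > 0)}"

text \<open>Transition rate matrix: nonnegative off-diagonal entries, rows summing to zero.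
  Since G is the complete graph, every off-diagonal entry (edge) is allowed.\<close>
definition transition_rate_matrix :: "real ^ 'n ^ 'n \<Rightarrow> bool" where
  "transition_rate_matrix Q \<longleftrightarrow>
     (\<forall>i j. i \<noteq> j \<longrightarrow> Q $ i $ j \<ge> 0) \<and> (\<forall>i. (\<Sum>j\<in>UNIV. Q $ i $ j) = 0)"

end

theory Submission
  imports Defs
begin

lemma comp_deriv:
  fixes \<rho> :: "real \<Rightarrow> real ^ 'n"
  assumes "(\<rho> has_vector_derivative D) (at t)"
  shows "((\<lambda>t. \<rho> t $ j) has_vector_derivative D $ j) (at t)"
  using bounded_linear.has_vector_derivative[OF bounded_linear_vec_nth assms] .

theorem mainTheorem4:
  fixes \<rho> :: "real \<Rightarrow> real ^ 'n" and T :: real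
  assumes "T > 0"
    and "\<And>t. \<rho> (t + T) = \<rho> t"
    and "\<And>t. \<rho> differentiable (at t)"
    and "\<And>t. \<rho> t \<in> prob_interior"
  shows "\<exists>Q :: real \<Rightarrow> real ^ 'n ^ 'n.
           (\<forall>t. transition_rate_matrix (Q t)) \<and>
           (\<forall>t. (\<rho> has_vector_derivative (\<rho> t v* Q t)) (at t))"
proof -
  define D where "D t = vector_derivative \<rho> (at t)" for t
  have hD: "(\<rho> has_vector_derivative D t) (at t)" for t
    unfolding D_def using assms(3) vector_derivative_works by blast
  have pos: "\<rho> t $ i > 0" and s1: "(\<Sum>i\<in>UNIV. \<rho> t $ i) = 1" for t i
    using assms(4)[of t] by (auto simp: prob_interior_def)
  have sumD: "(\<Sum>j\<in>UNIV. D t $ j) = 0" for t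
  proof -
    have "((\<lambda>t. \<Sum>j\<in>UNIV. \<rho> t $ j) has_vector_derivative (\<Sum>j\<in>UNIV. D t $ j)) (at t)"
      by (rule has_vector_derivative_sum, rule comp_deriv[OF hD])
    moreover have "((\<lambda>t. \<Sum>j\<in>UNIV. \<rho> t $ j) has_vector_derivative 0) (at t)"
      using s1 by simp
    ultimately show ?thesis using vector_derivative_unique_at by blast
  qed
  define M where "M t = (\<Sum>j\<in>UNIV. \<bar>D t $ j\<bar> / \<rho> t $ j)" for t
  define \<alpha> where "\<alpha> t j = D t $ j + \<rho> t $ j * M t" for t j
  define Q where "Q t = (\<chi> i j. \<alpha> t j - (if i = j then M t else 0))" for t
  have Mge: "\<bar>D t $ j\<bar> / \<rho> t $ j \<le> M t" for t j
    unfolding M_def by (rule member_le_sum) (auto intro: divide_nonneg_pos pos)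
  have \<alpha>nn: "\<alpha> t j \<ge> 0" for t j
  proof -
    have "\<bar>D t $ j\<bar> \<le> \<rho> t $ j * M t"
      using Mge[of t j] pos[of t j] by (simp add: divide_le_eq mult.commute)
    then show ?thesis unfolding \<alpha>_def by linarith
  qed
  have sa: "(\<Sum>j\<in>UNIV. \<alpha> t j) = M t" for t
    unfolding \<alpha>_def by (simp add: sum.distrib sumD sum_distrib_right[symmetric] s1)
  have "transition_rate_matrix (Q t)" for t
    unfolding transition_rate_matrix_def Q_def
    by (auto simp: \<alpha>nn sum_subtractf sa)
  moreover have "\<rho> t v* Q t = D t" for t
  proof -
    have "(\<rho> t v* Q t) $ j = D t $ j" for j
    proof -
      have "(\<rho> t v* Q t) $ j = (\<Sum>i\<in>UNIV. \<rho> t $ i * \<alpha> t j) - (\<Sum>i\<in>UNIV. \<rho> t $ i * (if i = j then M t else 0))"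
        by (simp add: vector_matrix_mult_def Q_def right_diff_distrib sum_subtractf)
      also have "\<dots> = \<alpha> t j - \<rho> t $ j * M t"
        by (simp add: sum_distrib_right[symmetric] s1 if_distrib cong: if_cong)
      finally show ?thesis by (simp add: \<alpha>_def)
    qed
    then show ?thesis by (simp add: vec_eq_iff)
  qed
  ultimately show ?thesis using hD by metis
qed

end
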